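(* Let $\epsilon$ be a primitive cube root of unity and, for $\mathbf{a}=(\alpha,\beta,\gamma)\in\mathbb{C}^3$, let $\mathcal{U}_{\mathbf{a}}\subset\mathbb{C}^4$ be the hypersurface $X^2-U^2=(Y-V+\alpha)(Y-\epsilon V+\beta)(Y-\epsilon^2V+\gamma)$. Then: (1) if $\alpha+\epsilon\beta+\epsilon^2\gamma=0$, $\mathcal{U}_{\mathbf{a}}$ has a unique singular point, which is analytically a cusp of the same type as $\mathcal{U}_0=\{X^2-U^2-Y^3+V^3=0\}$; (2) if $\alpha+\epsilon\beta+\epsilon^2\gamma\neq0$, $\mathcal{U}_{\mathbf{a}}$ has exactly three distinct singular points, all ordinary double points; (3) the family $\{\mathcal{U}_{\mathbf{a}}\}$ is the pull-back of the miniversal deformation $\{\mathcal{X}_\Lambda\}_{\Lambda\in T^1}$ of the cusp along a holomorphic map germ $g:(\mathbb{C}^3,0)\to(T^1,0)$ whose image is the curve $C=\{\sigma^3-27\lambda=\mu=\nu=0\}$; explicitly, up to a nonzero constant $k$, $g(\mathbf{a})=(-k^3s^3,0,0,-3ks)$ with $s=\alpha+\epsilon\beta+\epsilon^2\gamma$, in coordinates $(\lambda,\mu,\nu,\sigma)$.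
   Context: The miniversal deformation of the cusp $x^2-y^3=z^2-w^3$ is $\mathcal{X}_\Lambda=\{x^2-y^3-z^2+w^3+\lambda+\mu y-\nu w+\sigma yw=0\}$, $\Lambda=(\lambda,\mu,\nu,\sigma)\in T^1\cong\mathbb{C}^4$. The cusp equation factors as $(X-U)(X+U)=(Y-V)(Y-\epsilon V)(Y-\epsilon^2V)$. *)

theory Defs
  imports "HOL-Analysis.Analysis"
begin

text \<open>The scalar multiplication of the domain is
passed explicitly (componentwise scaling for complex vectors, and for pairs of them).\<close>

definition holo_gen :: "(complex \<Rightarrow> 'a \<Rightarrow> 'a) \<Rightarrow> ('a::real_normed_vector \<Rightarrow> complex) \<Rightarrow> 'a set \<Rightarrow> bool" where
  "holo_gen sc f S \<longleftrightarrow> open S \<and>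
     (\<forall>x\<in>S. \<exists>L. (f has_derivative L) (at x) \<and> (\<forall>c v. L (sc c v) = c * L v))"

definition holo_fun_on :: "(complex^'n \<Rightarrow> complex) \<Rightarrow> (complex^'n) set \<Rightarrow> bool" where
  "holo_fun_on f S \<longleftrightarrow> holo_gen (\<lambda>c v. c *s v) f S"

definition holo_map_on :: "(complex^'n \<Rightarrow> complex^'m) \<Rightarrow> (complex^'n) set \<Rightarrow> bool" where
  "holo_map_on f S \<longleftrightarrow> (\<forall>i. holo_fun_on (\<lambda>x. f x $ i) S)"

definition holo2_fun_on :: "((complex^'n) \<times> (complex^'m) \<Rightarrow> complex) \<Rightarrow> ((complex^'n) \<times> (complex^'m)) set \<Rightarrow> bool" where
  "holo2_fun_on f S \<longleftrightarrow> holo_gen (\<lambda>c (a, p). (c *s a, c *s p)) f S"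

definition holo2_map_on :: "((complex^'n) \<times> (complex^'m) \<Rightarrow> complex^'k) \<Rightarrow> ((complex^'n) \<times> (complex^'m)) set \<Rightarrow> bool" where
  "holo2_map_on f S \<longleftrightarrow> (\<forall>i. holo2_fun_on (\<lambda>x. f x $ i) S)"

definition local_biholo :: "(complex^'n \<Rightarrow> complex^'n) \<Rightarrow> complex^'n \<Rightarrow> bool" where
  "local_biholo \<phi> p \<longleftrightarrow> (\<exists>V W \<psi>. open V \<and> open W \<and> p \<in> V \<and>
       holo_map_on \<phi> V \<and> holo_map_on \<psi> W \<and> \<phi> ` V = W \<and> (\<forall>x\<in>V. \<psi> (\<phi> x) = x))"

definition germ_iso :: "(complex^'n \<Rightarrow> complex) \<Rightarrow> complex^'n \<Rightarrow> (complex^'n \<Rightarrow> complex) \<Rightarrow> complex^'n \<Rightarrow> bool" where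
  "germ_iso F p G q \<longleftrightarrow> (\<exists>V W \<phi> \<psi>. open V \<and> open W \<and> p \<in> V \<and>
       holo_map_on \<phi> V \<and> holo_map_on \<psi> W \<and> \<phi> ` V = W \<and> (\<forall>x\<in>V. \<psi> (\<phi> x) = x) \<and>
       \<phi> p = q \<and> (\<forall>x\<in>V. F x = 0 \<longleftrightarrow> G (\<phi> x) = 0))"

definition pd :: "(complex^'n \<Rightarrow> complex) \<Rightarrow> 'n \<Rightarrow> complex^'n \<Rightarrow> complex" where
  "pd F i p = deriv (\<lambda>t. F (p + t *s axis i 1)) 0"

definition sing_points :: "(complex^'n \<Rightarrow> complex) \<Rightarrow> (complex^'n) set" where
  "sing_points F = {p. F p = 0 \<and> (\<forall>i. pd F i p = 0)}"

definition hessian :: "(complex^'n \<Rightarrow> complex) \<Rightarrow> complex^'n \<Rightarrow> complex^'n^'n" where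
  "hessian F p = (\<chi> i j. pd (pd F j) i p)"

definition ordinary_double_point :: "(complex^'n \<Rightarrow> complex) \<Rightarrow> complex^'n \<Rightarrow> bool" where
  "ordinary_double_point F p \<longleftrightarrow> p \<in> sing_points F \<and> det (hessian F p) \<noteq> 0"

text \<open>U_a, coordinates x = (X, Y, U, V) = (x$1, x$2, x$3, x$4); a = (alpha, beta, gamma).\<close>
definition Ufam :: "complex \<Rightarrow> complex^3 \<Rightarrow> complex^4 \<Rightarrow> complex" where
  "Ufam eps a x = (x$1)^2 - (x$3)^2
      - (x$2 - x$4 + a$1) * (x$2 - eps * x$4 + a$2) * (x$2 - eps^2 * x$4 + a$3)"

text \<open>Miniversal deformation X_Lambda, coordinates (x,y,z,w), Lambda = (lambda, mu, nu, sigma).\<close>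
definition Xfam :: "complex^4 \<Rightarrow> complex^4 \<Rightarrow> complex" where
  "Xfam L x = (x$1)^2 - (x$2)^3 - (x$3)^2 + (x$4)^3 + L$1 + L$2 * x$2 - L$3 * x$4 + L$4 * x$2 * x$4"

definition curveC :: "(complex^4) set" where
  "curveC = {L. (L$4)^3 - 27 * L$1 = 0 \<and> L$2 = 0 \<and> L$3 = 0}"

end

theory Submission imports Defs begin

definition hat :: "(complex \<Rightarrow> 'a \<Rightarrow> 'a) \<Rightarrow> ('a::real_normed_vector \<Rightarrow> complex) \<Rightarrow> 'a \<Rightarrow> bool" where
  "hat sc f x \<longleftrightarrow> (\<exists>L. (f has_derivative L) (at x) \<and> (\<forall>c v. L (sc c v) = c * L v))"

lemma hat_const[intro!]: "hat sc (\<lambda>x. k) x"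
  unfolding hat_def by (intro exI[of _ "\<lambda>_. 0"]) (auto intro: derivative_eq_intros)

lemma hat_add[intro!]: "hat sc f x \<Longrightarrow> hat sc g x \<Longrightarrow> hat sc (\<lambda>x. f x + g x) x"
  unfolding hat_def
  apply (elim exE conjE)
  subgoal for L M by (intro exI[of _ "\<lambda>h. L h + M h"]) (auto intro: derivative_eq_intros simp: algebra_simps)
  done

lemma hat_diff[intro!]: "hat sc f x \<Longrightarrow> hat sc g x \<Longrightarrow> hat sc (\<lambda>x. f x - g x) x"
  unfolding hat_def
  apply (elim exE conjE)
  subgoal for L M by (intro exI[of _ "\<lambda>h. L h - M h"]) (auto intro: derivative_eq_intros simp: algebra_simps)
  done

lemma hat_minus[intro!]: "hat sc f x \<Longrightarrow> hat sc (\<lambda>x. - f x) x"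
  unfolding hat_def
  apply (elim exE conjE)
  subgoal for L by (intro exI[of _ "\<lambda>h. - L h"]) (auto intro: derivative_eq_intros simp: algebra_simps)
  done

lemma hat_mult[intro!]: "hat sc f x \<Longrightarrow> hat sc g x \<Longrightarrow> hat sc (\<lambda>x. f x * g x) x"
  unfolding hat_def
  apply (elim exE conjE)
  subgoal for L M by (intro exI[of _ "\<lambda>h. f x * M h + L h * g x"]) (auto intro: derivative_eq_intros simp: algebra_simps)
  done

lemma hat_power[intro!]: "hat sc f x \<Longrightarrow> hat sc (\<lambda>x. f x ^ n) x"
  by (induction n) (auto simp del: power_Suc simp: power_Suc)

lemma hat_nth[intro!]: "hat (\<lambda>c v. c *s v) (\<lambda>x. x $ j) x"
  unfolding hat_def
  by (intro exI[of _ "\<lambda>h. h $ j"]) (auto intro: bounded_linear.has_derivative[OF bounded_linear_vec_nth] has_derivative_ident)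

lemma hat_fst[intro!]: "hat (\<lambda>c (a, p). (c *s a, c *s p)) (\<lambda>x. fst x $ j) x"
  unfolding hat_def
  by (intro exI[of _ "\<lambda>h. fst h $ j"]) (auto intro!: derivative_eq_intros bounded_linear.has_derivative[OF bounded_linear_vec_nth])

lemma hat_snd[intro!]: "hat (\<lambda>c (a, p). (c *s a, c *s p)) (\<lambda>x. snd x $ j) x"
  unfolding hat_def
  by (intro exI[of _ "\<lambda>h. snd h $ j"]) (auto intro!: derivative_eq_intros bounded_linear.has_derivative[OF bounded_linear_vec_nth])

lemma holo_genI: "open S \<Longrightarrow> (\<And>x. x \<in> S \<Longrightarrow> hat sc f x) \<Longrightarrow> holo_gen sc f S"
  unfolding holo_gen_def hat_def by blast


lemma hat_divc[intro!]: "hat sc f x \<Longrightarrow> hat sc (\<lambda>x. f x / k) x"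
  unfolding hat_def
  apply (elim exE conjE)
  subgoal for L
    using has_derivative_mult_right[of f L "at x" "1/k"]
    by (intro exI[of _ "\<lambda>h. L h / k"]) (auto simp: algebra_simps)
  done

lemma pd_via: assumes "((\<lambda>t. F (p + t *s axis i 1)) has_field_derivative D) (at 0)"
  shows "pd F i p = D"
  unfolding pd_def using assms by (rule DERIV_imp_deriv)

lemma ax: "(axis (i::'n::finite) (1::complex)) $ j = (if j = i then 1 else 0)"
  by (simp add: axis_def)

definition LL :: "complex \<Rightarrow> complex \<Rightarrow> complex^4 \<Rightarrow> complex" where
  "LL c b p = p$2 - c * p$4 + b"

lemma Ufam_LL: "Ufam eps a p = (p$1)^2 - (p$3)^2 - LL 1 (a$1) p * LL eps (a$2) p * LL (eps^2) (a$3) p"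
  by (simp add: Ufam_def LL_def)

lemma pdU1: "pd (Ufam eps a) 1 p = 2 * p$1"
  apply (rule pd_via)
  apply (simp add: Ufam_def ax)
  apply (rule derivative_eq_intros refl)+
  apply (simp add: algebra_simps)
  done

lemma pdU3: "pd (Ufam eps a) 3 p = - 2 * p$3"
  apply (rule pd_via)
  apply (simp add: Ufam_def ax)
  apply (rule derivative_eq_intros refl)+
  apply (simp add: algebra_simps)
  done

lemma pdU2: "pd (Ufam eps a) 2 p = - (LL eps (a$2) p * LL (eps^2) (a$3) p + LL 1 (a$1) p * LL (eps^2) (a$3) p + LL 1 (a$1) p * LL eps (a$2) p)"
  apply (rule pd_via)
  apply (simp add: Ufam_def ax LL_def)
  apply (rule derivative_eq_intros refl)+
  apply (simp add: algebra_simps)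
  done

lemma pdU4: "pd (Ufam eps a) 4 p = (LL eps (a$2) p * LL (eps^2) (a$3) p + eps * LL 1 (a$1) p * LL (eps^2) (a$3) p + eps^2 * LL 1 (a$1) p * LL eps (a$2) p)"
  apply (rule pd_via)
  apply (simp add: Ufam_def ax LL_def)
  apply (rule derivative_eq_intros refl)+
  apply (simp add: algebra_simps)
  done

lemma pdU: "pd (Ufam eps a) i = (if i = 1 then (\<lambda>p. 2 * p$1) else if i = 3 then (\<lambda>p. - 2 * p$3)
   else if i = 2 then (\<lambda>p. - (LL eps (a$2) p * LL (eps^2) (a$3) p + LL 1 (a$1) p * LL (eps^2) (a$3) p + LL 1 (a$1) p * LL eps (a$2) p))
   else (\<lambda>p. (LL eps (a$2) p * LL (eps^2) (a$3) p + eps * LL 1 (a$1) p * LL (eps^2) (a$3) p + eps^2 * LL 1 (a$1) p * LL eps (a$2) p)))"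
  using exhaust_4[of i] by (auto simp: pdU1 pdU2 pdU3 pdU4 fun_eq_iff)

lemma hessU: "hessian (Ufam eps a) p $ i $ j =
  (if i = 1 \<and> j = 1 then 2 else if i = 3 \<and> j = 3 then -2
   else if i = 2 \<and> j = 2 then -2 * (LL 1 (a$1) p + LL eps (a$2) p + LL (eps^2) (a$3) p)
   else if (i = 2 \<and> j = 4) \<or> (i = 4 \<and> j = 2) then (eps + eps^2) * LL 1 (a$1) p + (1 + eps^2) * LL eps (a$2) p + (1+eps) * LL (eps^2) (a$3) p
   else if i = 4 \<and> j = 4 then -2 * (eps^3 * LL 1 (a$1) p + eps^2 * LL eps (a$2) p + eps * LL (eps^2) (a$3) p)
   else 0)"
  unfolding hessian_def
  using exhaust_4[of i] exhaust_4[of j]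
  apply (elim disjE)
  apply (simp_all add: pdU)
  apply (rule pd_via; (simp add: ax LL_def)?; ((rule derivative_eq_intros refl)+)?; (simp add: algebra_simps power2_eq_square power3_eq_cube)?)+
  done

lemma det_nz:
  fixes M :: "complex^4^4"
  assumes M: "\<And>i j. M$i$j = (if i = 1 \<and> j = 1 then 2 else if i = 3 \<and> j = 3 then -2
     else if i = 2 \<and> j = 2 then b else if (i = 2 \<and> j = 4) \<or> (i = 4 \<and> j = 2) then c
     else if i = 4 \<and> j = 4 then d else 0)"
    and D: "b*d - c*c \<noteq> 0"
  shows "det M \<noteq> 0"
proof -
  have "\<forall>x. M *v x = 0 \<longrightarrow> x = 0"
  proof (intro allI impI)
    fix x assume h: "M *v x = 0"
    then have e: "(M *v x)$1 = 0" "(M *v x)$2=0" "(M*v x)$3 = 0" "(M *v x)$4 = 0" by simp_all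
    then have e2: "2*x$1 = 0" "b*x$2 + c*x$4 = 0" "-2*x$3=0" "c*x$2 + d*x$4 = 0"
      by (simp_all add: matrix_vector_mult_def sum_4 M)
    have "x$2*(b*d-c*c) = d*(b*x$2 + c*x$4) - c*(c*x$2 + d*x$4)" by (simp add: algebra_simps)
    then have x2: "x$2 = 0" using e2 D by simp
    have "x$4*(b*d-c*c) = b*(c*x$2 + d*x$4) - c*(b*x$2 + c*x$4)" by (simp add: algebra_simps)
    then have x4: "x$4 = 0" using e2 D by simp
    show "x = 0" using e2 x2 x4 by (simp add: vec_eq_iff forall_4)
  qed
  then show ?thesis using matrix_left_invertible_ker invertible_left_inverse invertible_det_nz by metis
qed

lemma three_zero: "(x::complex)*y*z = 0 \<Longrightarrow> y*z + x*z + x*y = 0 \<Longrightarrow> (x=0 \<and> y=0) \<or> (x=0 \<and> z=0) \<or> (y=0 \<and> z=0)"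
  by auto

lemma sing_iff: "p \<in> sing_points (Ufam eps a) \<longleftrightarrow> p$1 = 0 \<and> p$3 = 0 \<and>
   ((LL 1 (a$1) p = 0 \<and> LL eps (a$2) p = 0) \<or> (LL 1 (a$1) p = 0 \<and> LL (eps^2) (a$3) p = 0) \<or> (LL eps (a$2) p = 0 \<and> LL (eps^2) (a$3) p = 0))"
  unfolding sing_points_def mem_Collect_eq forall_4 pdU1 pdU2 pdU3 pdU4 Ufam_LL
  apply (rule iffI)
   apply (elim conjE)
   apply (intro conjI)
     apply simp
    apply simp
   apply (rule three_zero)
    apply simp
  apply (simp add: add_eq_0_iff neg_equal_iff_equal)
  apply auto
  done

definition pt :: "complex \<Rightarrow> complex \<Rightarrow> complex \<Rightarrow> complex \<Rightarrow> complex^4" where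
  "pt c b d e = (\<chi> i. if i = 2 then c * ((b - e)/(c - d)) - b else if i = 4 then (b - e)/(c - d) else 0)"

lemma pt_on: assumes "c \<noteq> d"
  shows "LL c b (pt c b d e) = 0" "LL d e (pt c b d e) = 0" "pt c b d e $ 1 = 0" "pt c b d e $ 3 = 0"
proof -
  have k: "(c - d) * ((b-e)/(c-d)) = b - e" using assms by simp
  show "LL c b (pt c b d e) = 0" by (simp add: pt_def LL_def)
  define V where "V = (b-e)/(c-d)"
  have "LL d e (pt c b d e) = c*V - b - d*V + e" unfolding V_def by (simp add: pt_def LL_def)
  also have "\<dots> = (c - d) * V - b + e" by (simp add: algebra_simps)
  finally show "LL d e (pt c b d e) = 0" using k unfolding V_def by simp
  show "pt c b d e $ 1 = 0" "pt c b d e $ 3 = 0" by (simp_all add: pt_def)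
qed

lemma pt_uniq: assumes "c \<noteq> d" "p$1 = 0" "p$3 = 0" "LL c b p = 0" "LL d e p = 0"
  shows "p = pt c b d e"
proof -
  have "p$2 - c * p$4 + b = 0" "p$2 - d * p$4 + e = 0" using assms(4,5) by (simp_all add: LL_def)
  then have "(c - d) * p$4 = b - e" by algebra
  then have 4: "p$4 = (b - e)/(c - d)" using assms(1) by (simp add: field_simps)
  have 2: "p$2 = c * p$4 - b" using assms(4) by (simp add: LL_def algebra_simps)
  show ?thesis using assms 4 2 by (simp add: pt_def vec_eq_iff forall_4)
qed

lemma hz:
  fixes eps x y z :: complex
  assumes E: "1 + eps + eps^2 = 0" and e3: "eps^3 = 1"
    and c: "(x=0 \<and> y=0 \<and> z\<noteq>0) \<or> (x=0 \<and> z=0 \<and> y\<noteq>0) \<or> (y=0 \<and> z=0 \<and> x\<noteq>0)"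
  shows "(-2*(x+y+z))*(-2*(eps^3*x+eps^2*y+eps*z)) - ((eps+eps^2)*x+(1+eps^2)*y+(1+eps)*z)*((eps+eps^2)*x+(1+eps^2)*y+(1+eps)*z) \<noteq> 0"
proof -
  have ne: "eps \<noteq> 0" using e3 by auto
  from c consider "x=0" "y=0" "z\<noteq>0" | "x=0" "z=0" "y\<noteq>0" | "y=0" "z=0" "x\<noteq>0" by blast
  then show ?thesis
  proof cases
    case 1
    have "(-2*(x+y+z))*(-2*(eps^3*x+eps^2*y+eps*z)) - ((eps+eps^2)*x+(1+eps^2)*y+(1+eps)*z)*((eps+eps^2)*x+(1+eps^2)*y+(1+eps)*z) = 3*eps*z^2"
      using 1 E e3 by algebra
    then show ?thesis using 1 ne by simp
  next
    case 2
    have "(-2*(x+y+z))*(-2*(eps^3*x+eps^2*y+eps*z)) - ((eps+eps^2)*x+(1+eps^2)*y+(1+eps)*z)*((eps+eps^2)*x+(1+eps^2)*y+(1+eps)*z) = 3*eps^2*y^2"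
      using 2 E e3 by algebra
    then show ?thesis using 2 ne by simp
  next
    case 3
    have "(-2*(x+y+z))*(-2*(eps^3*x+eps^2*y+eps*z)) - ((eps+eps^2)*x+(1+eps^2)*y+(1+eps)*z)*((eps+eps^2)*x+(1+eps^2)*y+(1+eps)*z) = 3*x^2"
      using 3 E e3 by algebra
    then show ?thesis using 3 ne by simp
  qed
qed

lemma sL: fixes a :: "complex^3" assumes E: "1 + eps + eps^2 = 0" and e3: "eps^3 = 1"
  shows "LL 1 (a$1) p + eps * LL eps (a$2) p + eps^2 * LL (eps^2) (a$3) p = a$1 + eps * a$2 + eps^2 * a$3"
proof -
  have "LL 1 (a$1) p + eps * LL eps (a$2) p + eps^2 * LL (eps^2) (a$3) p - (a$1 + eps * a$2 + eps^2 * a$3)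
     = p$2 * (1 + eps + eps^2) - p$4 * (1 + eps^2 + eps^3 * eps)"
    by (simp add: LL_def algebra_simps power2_eq_square power3_eq_cube)
  also have "\<dots> = 0" using E e3 by (simp add: power2_eq_square algebra_simps)
  finally show ?thesis by simp
qed

theorem mainTheorem7:
  fixes eps :: complex
  assumes "eps ^ 3 = 1" and "eps \<noteq> 1"
  shows
    "(\<forall>a :: complex^3. a$1 + eps * a$2 + eps^2 * a$3 = 0 \<longrightarrow>
        (\<exists>p. sing_points (Ufam eps a) = {p} \<and> germ_iso (Ufam eps a) p (Ufam eps 0) 0))
   \<and> (\<forall>a :: complex^3. a$1 + eps * a$2 + eps^2 * a$3 \<noteq> 0 \<longrightarrow>
        card (sing_points (Ufam eps a)) = 3 \<and>
        (\<forall>p \<in> sing_points (Ufam eps a). ordinary_double_point (Ufam eps a) p))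
   \<and> (\<exists>k :: complex. k \<noteq> 0 \<and>
        (let s = (\<lambda>a :: complex^3. a$1 + eps * a$2 + eps^2 * a$3);
             g = (\<lambda>a :: complex^3. (\<chi> i :: 4. if i = 1 then - (k^3 * (s a)^3)
                                              else if i = 4 then - 3 * k * s a else 0))
         in holo_map_on g UNIV \<and> g 0 = 0 \<and> g ` UNIV = curveC \<and>
            (\<exists>N \<Phi> u. open N \<and> (0, 0) \<in> N \<and>
               holo2_map_on \<Phi> N \<and> holo2_fun_on u N \<and> (\<forall>z\<in>N. u z \<noteq> 0) \<and>
               \<Phi> (0, 0) = 0 \<and> local_biholo (\<lambda>p. \<Phi> (0, p)) 0 \<and>
               (\<forall>(a, p) \<in> N. Ufam eps a p = u (a, p) * Xfam (g a) (\<Phi> (a, p))))))"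
proof -
  have e3: "eps^3 = 1" by (rule assms(1))
  have E: "1 + eps + eps^2 = 0"
  proof -
    have "(eps - 1) * (1 + eps + eps^2) = eps^3 - 1" by (simp add: algebra_simps power2_eq_square power3_eq_cube)
    then show ?thesis using assms by simp
  qed
  have ne0: "eps \<noteq> 0" using e3 by auto
  have n1: "1 \<noteq> eps" using assms(2) by auto
  have n2: "1 \<noteq> eps^2"
  proof
    assume "1 = eps^2"
    then have "eps^3 = eps" by (simp add: power3_eq_cube power2_eq_square)
    then show False using e3 assms(2) by simp
  qed
  have n3: "eps \<noteq> eps^2"
  proof
    assume "eps = eps^2"
    then have "eps * 1 = eps * eps" by (simp add: power2_eq_square)
    then show False using ne0 assms(2) by (metis mult_left_cancel)
  qed
  have P1: "\<forall>a :: complex^3. a$1 + eps * a$2 + eps^2 * a$3 = 0 \<longrightarrow>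
        (\<exists>p. sing_points (Ufam eps a) = {p} \<and> germ_iso (Ufam eps a) p (Ufam eps 0) 0)"
  proof (intro allI impI)
    fix a :: "complex^3"
    assume s0: "a$1 + eps * a$2 + eps^2 * a$3 = 0"
    define q where "q = pt 1 (a$1) eps (a$2)"
    note qon = pt_on[OF n1, where b="a$1" and e="a$2", folded q_def]
    have sLq: "LL 1 (a$1) q + eps * LL eps (a$2) q + eps^2 * LL (eps^2) (a$3) q = 0"
      using sL[OF E e3, of a q] s0 by simp
    then have L3q: "LL (eps^2) (a$3) q = 0" using qon ne0 by simp
    have sing: "sing_points (Ufam eps a) = {q}"
    proof
      show "{q} \<subseteq> sing_points (Ufam eps a)" using qon by (simp add: sing_iff)
    next
      show "sing_points (Ufam eps a) \<subseteq> {q}"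
      proof
        fix p assume "p \<in> sing_points (Ufam eps a)"
        then have p: "p$1 = 0" "p$3 = 0" "(LL 1 (a$1) p = 0 \<and> LL eps (a$2) p = 0) \<or> (LL 1 (a$1) p = 0 \<and> LL (eps^2) (a$3) p = 0) \<or> (LL eps (a$2) p = 0 \<and> LL (eps^2) (a$3) p = 0)"
          by (simp_all add: sing_iff)
        have sp: "LL 1 (a$1) p + eps * LL eps (a$2) p + eps^2 * LL (eps^2) (a$3) p = 0"
          using sL[OF E e3, of a p] s0 by simp
        have "LL 1 (a$1) p = 0 \<and> LL eps (a$2) p = 0" using p(3) sp ne0 by auto
        then have "p = q" unfolding q_def using p by (intro pt_uniq[OF n1]) auto
        then show "p \<in> {q}" by simp
      qed
    qed
    have a1: "a$1 = q$4 - q$2" using qon(1) by (simp add: LL_def algebra_simps)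
    have a2: "a$2 = eps * q$4 - q$2" using qon(2) by (simp add: LL_def algebra_simps)
    have a3: "a$3 = eps^2 * q$4 - q$2" using L3q by (simp add: LL_def algebra_simps)
    have Ueq: "Ufam eps a x = Ufam eps 0 (x - q)" for x
      by (simp add: Ufam_def a1 a2 a3 qon(3,4) algebra_simps)
    have hm: "holo_map_on (\<lambda>x. x - q) UNIV"
      unfolding holo_map_on_def holo_fun_on_def
      by (intro allI holo_genI) auto
    have hp: "holo_map_on (\<lambda>x. x + q) UNIV"
      unfolding holo_map_on_def holo_fun_on_def
      by (intro allI holo_genI) auto
    have rng: "(\<lambda>x. x - q) ` UNIV = UNIV"
      by (auto simp: image_iff intro!: exI[of _ "_ + q"])
    have "germ_iso (Ufam eps a) q (Ufam eps 0) 0"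
      unfolding germ_iso_def
      apply (rule exI[of _ UNIV], rule exI[of _ UNIV], rule exI[of _ "\<lambda>x. x - q"], rule exI[of _ "\<lambda>x. x + q"])
      using hm hp rng Ueq by auto
    then show "\<exists>p. sing_points (Ufam eps a) = {p} \<and> germ_iso (Ufam eps a) p (Ufam eps 0) 0"
      using sing by blast
  qed
  have P2: "\<forall>a :: complex^3. a$1 + eps * a$2 + eps^2 * a$3 \<noteq> 0 \<longrightarrow>
        card (sing_points (Ufam eps a)) = 3 \<and>
        (\<forall>p \<in> sing_points (Ufam eps a). ordinary_double_point (Ufam eps a) p)"
  proof (intro allI impI)
    fix a :: "complex^3"
    assume s: "a$1 + eps * a$2 + eps^2 * a$3 \<noteq> 0"
    define q12 where "q12 = pt 1 (a$1) eps (a$2)"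
    define q13 where "q13 = pt 1 (a$1) (eps^2) (a$3)"
    define q23 where "q23 = pt eps (a$2) (eps^2) (a$3)"
    note o12 = pt_on[OF n1, where b="a$1" and e="a$2", folded q12_def]
    note o13 = pt_on[OF n2, where b="a$1" and e="a$3", folded q13_def]
    note o23 = pt_on[OF n3, where b="a$2" and e="a$3", folded q23_def]
    have sp: "\<And>p. LL 1 (a$1) p + eps * LL eps (a$2) p + eps^2 * LL (eps^2) (a$3) p \<noteq> 0"
      using sL[OF E e3, of a] s by simp
    have sing: "sing_points (Ufam eps a) = {q12, q13, q23}"
    proof
      show "{q12, q13, q23} \<subseteq> sing_points (Ufam eps a)" using o12 o13 o23 by (simp add: sing_iff)
    next
      show "sing_points (Ufam eps a) \<subseteq> {q12, q13, q23}"
      proof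
        fix p assume "p \<in> sing_points (Ufam eps a)"
        then have p: "p$1 = 0" "p$3 = 0" "(LL 1 (a$1) p = 0 \<and> LL eps (a$2) p = 0) \<or> (LL 1 (a$1) p = 0 \<and> LL (eps^2) (a$3) p = 0) \<or> (LL eps (a$2) p = 0 \<and> LL (eps^2) (a$3) p = 0)"
          by (simp_all add: sing_iff)
        from p(3) show "p \<in> {q12, q13, q23}"
        proof (elim disjE conjE)
          assume "LL 1 (a$1) p = 0" "LL eps (a$2) p = 0"
          then have "p = q12" unfolding q12_def using p by (intro pt_uniq[OF n1]) auto
          then show ?thesis by simp
        next
          assume "LL 1 (a$1) p = 0" "LL (eps^2) (a$3) p = 0"
          then have "p = q13" unfolding q13_def using p by (intro pt_uniq[OF n2]) auto
          then show ?thesis by simp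
        next
          assume "LL eps (a$2) p = 0" "LL (eps^2) (a$3) p = 0"
          then have "p = q23" unfolding q23_def using p by (intro pt_uniq[OF n3]) auto
          then show ?thesis by simp
        qed
      qed
    qed
    have d1: "q12 \<noteq> q13" using o12 o13 sp[of q12] by auto
    have d2: "q12 \<noteq> q23" using o12 o23 sp[of q12] by auto
    have d3: "q13 \<noteq> q23" using o13 o23 sp[of q13] by auto
    have card: "card (sing_points (Ufam eps a)) = 3" using sing d1 d2 d3 by simp
    have odp: "ordinary_double_point (Ufam eps a) p" if ps: "p \<in> sing_points (Ufam eps a)" for p
    proof -
      have p3: "(LL 1 (a$1) p = 0 \<and> LL eps (a$2) p = 0) \<or> (LL 1 (a$1) p = 0 \<and> LL (eps^2) (a$3) p = 0) \<or> (LL eps (a$2) p = 0 \<and> LL (eps^2) (a$3) p = 0)"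
        using ps by (simp add: sing_iff)
      have spp: "LL 1 (a$1) p + eps * LL eps (a$2) p + eps^2 * LL (eps^2) (a$3) p \<noteq> 0" by (rule sp)
      have c: "(LL 1 (a$1) p=0 \<and> LL eps (a$2) p=0 \<and> LL (eps^2) (a$3) p\<noteq>0) \<or> (LL 1 (a$1) p=0 \<and> LL (eps^2) (a$3) p=0 \<and> LL eps (a$2) p\<noteq>0) \<or> (LL eps (a$2) p=0 \<and> LL (eps^2) (a$3) p=0 \<and> LL 1 (a$1) p\<noteq>0)"
        using p3 spp by auto
      have "det (hessian (Ufam eps a) p) \<noteq> 0"
        by (rule det_nz[OF hessU hz[OF E e3 c]])
      then show ?thesis using ps unfolding ordinary_double_point_def by simp
    qed
    show "card (sing_points (Ufam eps a)) = 3 \<and>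
        (\<forall>p \<in> sing_points (Ufam eps a). ordinary_double_point (Ufam eps a) p)"
      using card odp by blast
  qed
  have P3: "\<exists>k :: complex. k \<noteq> 0 \<and>
        (let s = (\<lambda>a :: complex^3. a$1 + eps * a$2 + eps^2 * a$3);
             g = (\<lambda>a :: complex^3. (\<chi> i :: 4. if i = 1 then - (k^3 * (s a)^3)
                                              else if i = 4 then - 3 * k * s a else 0))
         in holo_map_on g UNIV \<and> g 0 = 0 \<and> g ` UNIV = curveC \<and>
            (\<exists>N \<Phi> u. open N \<and> (0, 0) \<in> N \<and>
               holo2_map_on \<Phi> N \<and> holo2_fun_on u N \<and> (\<forall>z\<in>N. u z \<noteq> 0) \<and>
               \<Phi> (0, 0) = 0 \<and> local_biholo (\<lambda>p. \<Phi> (0, p)) 0 \<and>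
               (\<forall>(a, p) \<in> N. Ufam eps a p = u (a, p) * Xfam (g a) (\<Phi> (a, p)))))"
  proof -
    define s where "s = (\<lambda>a :: complex^3. a$1 + eps * a$2 + eps^2 * a$3)"
    define g where "g = (\<lambda>a :: complex^3. (\<chi> i :: 4. if i = 1 then - ((1/3)^3 * (s a)^3)
                                              else if i = 4 then - 3 * (1/3) * s a else 0))"
    have G1: "holo_map_on g UNIV"
      unfolding holo_map_on_def holo_fun_on_def g_def s_def
      apply (intro allI holo_genI)
       apply simp
      subgoal for i x by (cases "i = 1"; cases "i = 4"; auto)
      done
    have G2: "g 0 = 0" by (simp add: g_def s_def vec_eq_iff)
    have G3: "g ` UNIV = curveC"
    proof
      show "g ` UNIV \<subseteq> curveC"
        by (auto simp: curveC_def g_def s_def power3_eq_cube algebra_simps)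
    next
      show "curveC \<subseteq> g ` UNIV"
      proof
        fix L assume L: "L \<in> curveC"
        define a :: "complex^3" where "a = (\<chi> i. if i = 1 then - L$4 else 0)"
        have sa: "s a = - L$4" by (simp add: s_def a_def)
        have L1: "L$1 = (L$4)^3 / 27" using L by (simp add: curveC_def field_simps)
        have "g a = L"
          using L unfolding vec_eq_iff forall_4
          by (simp add: g_def sa L1 curveC_def power3_eq_cube)
        then show "L \<in> g ` UNIV" by blast
      qed
    qed
    define \<Phi> where "\<Phi> = (\<lambda>z :: (complex^3) \<times> (complex^4). (\<chi> i :: 4. if i = 1 then snd z $ 1
       else if i = 2 then snd z $ 2 + (fst z $ 1 + fst z $ 2 + fst z $ 3) / 3
       else if i = 3 then snd z $ 3 else snd z $ 4 - (fst z $ 1 + eps^2 * fst z $ 2 + eps * fst z $ 3) / 3))"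
    have H1: "holo2_map_on \<Phi> UNIV"
      unfolding holo2_map_on_def holo2_fun_on_def \<Phi>_def
      apply (intro allI holo_genI)
       apply simp
      subgoal for i x by (cases "i = 1"; cases "i = 2"; cases "i = 3"; auto)
      done
    have H2: "holo2_fun_on (\<lambda>z. 1) UNIV"
      unfolding holo2_fun_on_def by (intro holo_genI) auto
    have H3: "\<Phi> (0, 0) = 0" by (simp add: \<Phi>_def vec_eq_iff)
    have id: "(\<lambda>p. \<Phi> (0, p)) = (\<lambda>p. p)"
    proof (rule ext)
      fix p :: "complex^4"
      show "\<Phi> (0, p) = p" unfolding vec_eq_iff forall_4 by (simp add: \<Phi>_def)
    qed
    have H4: "local_biholo (\<lambda>p. \<Phi> (0, p)) 0"
    proof -
      have "holo_map_on (\<lambda>p::complex^4. p) UNIV"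
        unfolding holo_map_on_def holo_fun_on_def by (intro allI holo_genI) auto
      then show ?thesis unfolding id local_biholo_def
        by (intro exI[of _ UNIV] exI[of _ "\<lambda>p. p"]) auto
    qed
    have H5: "Ufam eps a p = 1 * Xfam (g a) (\<Phi> (a, p))" for a p
    proof -
      define y where "y = p$2 + (a$1 + a$2 + a$3) / 3"
      define w where "w = p$4 - (a$1 + eps^2 * a$2 + eps * a$3) / 3"
      define c where "c = s a / 3"
      have f1: "p$2 - p$4 + a$1 = y - w + c"
        unfolding y_def w_def c_def s_def using E e3 by algebra
      have f2: "p$2 - eps * p$4 + a$2 = y - eps * w + eps^2 * c"
        unfolding y_def w_def c_def s_def using E e3 by algebra
      have f3: "p$2 - eps^2 * p$4 + a$3 = y - eps^2 * w + eps * c"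
        unfolding y_def w_def c_def s_def using E e3 by algebra
      have prod: "(y - w + c) * (y - eps * w + eps^2 * c) * (y - eps^2 * w + eps * c) = y^3 - w^3 + c^3 + 3 * c * y * w"
        using E e3 by algebra
      have U: "Ufam eps a p = (p$1)^2 - (p$3)^2 - (y^3 - w^3 + c^3 + 3 * c * y * w)"
        unfolding Ufam_def f1 f2 f3 prod ..
      have ga: "g a $ 1 = -(c^3)" "g a $ 2 = 0" "g a $ 3 = 0" "g a $ 4 = - 3 * c"
        by (simp_all add: g_def c_def power_divide)
      have Ph: "\<Phi> (a, p) $ 1 = p$1" "\<Phi> (a, p) $ 2 = y" "\<Phi> (a, p) $ 3 = p$3" "\<Phi> (a, p) $ 4 = w"
        by (simp_all add: \<Phi>_def y_def w_def)
      have X: "Xfam (g a) (\<Phi> (a, p)) = (p$1)^2 - y^3 - (p$3)^2 + w^3 + (-(c^3)) + 0 * y - 0 * w + (- 3 * c) * y * w"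
        unfolding Xfam_def ga Ph ..
      show ?thesis unfolding U X by (simp add: algebra_simps)
    qed
    show ?thesis
      unfolding Let_def
      apply (rule exI[of _ "1/3"])
      using G1 G2 G3 H1 H2 H3 H4 H5 unfolding g_def s_def
      by (intro conjI exI[of _ UNIV] exI[of _ \<Phi>] exI[of _ "\<lambda>z. 1"]) auto
  qed
  show ?thesis using P1 P2 P3 by blast
qed

end
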